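(* Let $G$ be a finite simple graph with a perfect matching $M$, let $\mathcal{C}$ be an optimal edge $2$-colouring of $G$, and let $\mathcal{F}$, $P$, $\mathcal{C}_M$, $P_j,D_j,U_j,V_j,S_j$ and the sets $\mathcal{H},\mathcal{L}$ be as in the context. Then: (a) $|S_j|\ge |P_j|+1$ for all $j\in\mathcal{C}_M$; (b) $\mathrm{rp}(S_j)\ge (|P_j|-1)/2$ for all $j\in\mathcal{C}_M$; (c) if $D_j\ne\emptyset$ then $j\in\mathcal{H}$; (d) for $j\in\mathcal{L}$, every vertex of $S_j$ has its $M$-partner also in $S_j$; furthermore $S_j$ has a unique maximum element $v^\ast$ with respect to $\preceq_{\mathcal{F}}$; (e) $|S_j|\ge 4$ for every $j\in\mathcal{L}$.
   Context: $G\setminus M$ is the spanning subgraph with edge set $E(G)\setminus M$, with connected components $C_1,\dots,C_h$. An edge $2$-colouring assigns colours to edges (not necessarily properly) so that each vertex sees at most $2$ distinct colours; optimal means maximum number of colours. $\mathrm{mcl}(u)$ is the colour of the $M$-edge at $u$; $\mathcal{C}_M$ is the set of colours used on $M$ (matching colours) and $\mathcal{C}_N$ the remaining colours (non-matching colours). For a colour $i$, $G[i]$ is the subgraph spanned by the edges of colour $i$; for $i\in\mathcal{C}_N$ it is called a non-matching colour component, and $k_m$ denotes the number of non-matching colour components contained in $C_m$. Forests: rooted trees, $r(F)$ roots, $l(F)$ leaves (non-root vertices with no children); each tree has a depth-first indexing $\mathrm{dfs}_T$ (descendants get larger indices) and order $u\preceq_T v$ iff $\mathrm{dfs}_T(u)\ge\mathrm{dfs}_T(v)$;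 in a forest, vertices of different trees are incomparable. $(T_1,T_2)$ is a cascading pair if they are vertex-disjoint or $r(T_2)\in l(T_1)$ and $|V(T_1)\cap V(T_2)|=1$; $\mathcal{F}=\{F_1,\dots,F_l\}$ is a cascading sequence of forests if $V(F_i)\cap V(F_j)=\emptyset$ for $|i-j|\ge2$ and every tree of $F_i$ with every tree of $F_{i+1}$ forms a cascading pair. $V(\mathcal{F})=\bigcup_F V(F)$; an internal vertex of $\mathcal{F}$ is a vertex of some $F\in\mathcal{F}$ that is neither a root nor a leaf of $F$, and $\mathrm{Int}(\mathcal{F})$ is the set of these. $\preceq_{\mathcal{F}}$ is the transitive closure of "$x\preceq_F y$ for some $F\in\mathcal{F}$"; $x\mathcal{F}y$ is the path $xFy$ in the forest $F\in\mathcal{F}$ containing an $x$–$y$ path. Standing data: $\mathcal{F}$ is a cascading sequence of forests in $G\setminus M$ with $\sum_{F\in\mathcal{F}}|l(F)|=\sum_{m=1}^h(k_m-1)$, with $\mathrm{Int}(\mathcal{F})\cap V(H)=\emptyset$ for every non-matching colour component $H$, and such that for each $F\in\mathcal{F}$ and $u\in r(F)\cup l(F)$ every edge of $F$ at $u$ has colour $\mathrm{mcl}(u)$. $P=\{(u_i,v_i)\}$ is a set of $\sum_{m}(k_m-1)$ pairs of vertices of $V(\mathcal{F})$ such that: (a) the $u_i$ are pairwise distinct; (b) $u_i\prec_{\mathcal{F}}v_i$ and the path $u_i\mathcal{F}v_i$ exists; (c) $\mathrm{mcl}(u_i)=\mathrm{mcl}(v_i)$; (d) $u_i\mathcal{F}v_i$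 is monochromatic of colour $\mathrm{mcl}(u_i)$; (e) every internal vertex $z$ of $u_i\mathcal{F}v_i$ has $\mathrm{mcl}(z)\ne\mathrm{mcl}(u_i)$; (f) for $i\ne j$ with $u_iv_i,u_jv_j\in M$ the paths $u_i\mathcal{F}v_i,u_j\mathcal{F}v_j$ share no internal vertex. For $j\in\mathcal{C}_M$: $P_j=\{(u,v)\in P:\mathrm{mcl}(u)=\mathrm{mcl}(v)=j\}$; $D_j=\{(u,v)\in P_j: uv\in M\}$ (denoted $C_j$ in the paper); $U_j$, $V_j$ are the sets of first and second coordinates of pairs in $P_j$; $S_j=U_j\cup V_j$. For an $M$-monochromatic set $S$ (all $M$-edges at vertices of $S$ have the same colour), $\mathrm{rp}(S)=i(S;M)-1$ where $i(S;M)$ is the number of $M$-edges incident with $S$. A colour $j\in\mathcal{C}_M$ is high ($j\in\mathcal{H}$) if $\mathrm{rp}(S_j)\ge(|P_j|-|D_j|)/2$, and low ($j\in\mathcal{L}$) otherwise. *)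

theory Defs
  imports Complex_Main
begin

definition simple_graph :: "'v set \<Rightarrow> 'v set set \<Rightarrow> bool" where
  "simple_graph V E \<longleftrightarrow> finite V \<and> (\<forall>e\<in>E. e \<subseteq> V \<and> card e = 2)"

definition perfect_matching :: "'v set \<Rightarrow> 'v set set \<Rightarrow> 'v set set \<Rightarrow> bool" where
  "perfect_matching V E M \<longleftrightarrow> M \<subseteq> E \<and> (\<forall>v\<in>V. \<exists>!e. e \<in> M \<and> v \<in> e)"

definition edge_2_colouring :: "'v set \<Rightarrow> 'v set set \<Rightarrow> ('v set \<Rightarrow> nat) \<Rightarrow> bool" where
  "edge_2_colouring V E col \<longleftrightarrow> (\<forall>v\<in>V. card (col ` {e\<in>E. v \<in> e}) \<le> 2)"

definition optimal_2_colouring :: "'v set \<Rightarrow> 'v set set \<Rightarrow> ('v set \<Rightarrow> nat) \<Rightarrow> bool" where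
  "optimal_2_colouring V E col \<longleftrightarrow> edge_2_colouring V E col \<and>
     (\<forall>col'. edge_2_colouring V E col' \<longrightarrow> card (col' ` E) \<le> card (col ` E))"

definition mcl :: "'v set set \<Rightarrow> ('v set \<Rightarrow> nat) \<Rightarrow> 'v \<Rightarrow> nat" where
  "mcl M col u = col (THE e. e \<in> M \<and> u \<in> e)"

definition matching_colours :: "'v set set \<Rightarrow> ('v set \<Rightarrow> nat) \<Rightarrow> nat set" where
  "matching_colours M col = col ` M"

definition nonmatching_colours :: "'v set set \<Rightarrow> 'v set set \<Rightarrow> ('v set \<Rightarrow> nat) \<Rightarrow> nat set" where
  "nonmatching_colours E M col = col ` E - col ` M"

definition colour_verts :: "'v set set \<Rightarrow> ('v set \<Rightarrow> nat) \<Rightarrow> nat \<Rightarrow> 'v set" where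
  "colour_verts E col i = \<Union> {e\<in>E. col e = i}"

definition adj_minus :: "'v set set \<Rightarrow> 'v set set \<Rightarrow> 'v \<Rightarrow> 'v \<Rightarrow> bool" where
  "adj_minus E M x y \<longleftrightarrow> {x, y} \<in> E - M"

definition comp_of :: "'v set \<Rightarrow> 'v set set \<Rightarrow> 'v set set \<Rightarrow> 'v \<Rightarrow> 'v set" where
  "comp_of V E M v = {w\<in>V. (adj_minus E M)\<^sup>*\<^sup>* v w}"

definition components_minus :: "'v set \<Rightarrow> 'v set set \<Rightarrow> 'v set set \<Rightarrow> 'v set set" where
  "components_minus V E M = comp_of V E M ` V"

definition kcount :: "'v set set \<Rightarrow> 'v set set \<Rightarrow> ('v set \<Rightarrow> nat) \<Rightarrow> 'v set \<Rightarrow> nat" where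
  "kcount E M col C = card {i \<in> nonmatching_colours E M col. colour_verts E col i \<subseteq> C}"

definition excess :: "'v set \<Rightarrow> 'v set set \<Rightarrow> 'v set set \<Rightarrow> ('v set \<Rightarrow> nat) \<Rightarrow> int" where
  "excess V E M col = (\<Sum>C\<in>components_minus V E M. int (kcount E M col C) - 1)"

text \<open>A rooted forest is given by its vertex set, a parent function (roots have no parent)
  and an indexing of the vertices (one depth-first indexing per tree).\<close>
record 'v rforest =
  fverts :: "'v set"
  fpar :: "'v \<Rightarrow> 'v option"
  fdfs :: "'v \<Rightarrow> nat"

definition fstep :: "'v rforest \<Rightarrow> 'v \<Rightarrow> 'v \<Rightarrow> bool" where
  "fstep F x y \<longleftrightarrow> x \<in> fverts F \<and> fpar F x = Some y"

text \<open>anc F x y: y is an ancestor of x (reflexive), i.e. x is a descendant of y.\<close>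
definition anc :: "'v rforest \<Rightarrow> 'v \<Rightarrow> 'v \<Rightarrow> bool" where
  "anc F x y \<longleftrightarrow> x \<in> fverts F \<and> (fstep F)\<^sup>*\<^sup>* x y"

definition froots :: "'v rforest \<Rightarrow> 'v set" where
  "froots F = {r\<in>fverts F. fpar F r = None}"

definition fleaves :: "'v rforest \<Rightarrow> 'v set" where
  "fleaves F = {v\<in>fverts F. fpar F v \<noteq> None \<and> \<not> (\<exists>w\<in>fverts F. fpar F w = Some v)}"

definition fedges :: "'v rforest \<Rightarrow> 'v set set" where
  "fedges F = {{v, p} |v p. v \<in> fverts F \<and> fpar F v = Some p}"

definition same_tree :: "'v rforest \<Rightarrow> 'v \<Rightarrow> 'v \<Rightarrow> bool" where
  "same_tree F x y \<longleftrightarrow> x \<in> fverts F \<and> y \<in> fverts F \<and> (\<exists>w. anc F x w \<and> anc F y w)"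

definition tree_verts :: "'v rforest \<Rightarrow> 'v \<Rightarrow> 'v set" where
  "tree_verts F r = {v\<in>fverts F. anc F v r}"

definition descendants :: "'v rforest \<Rightarrow> 'v \<Rightarrow> 'v set" where
  "descendants F v = {w\<in>fverts F. anc F w v}"

text \<open>F is a rooted forest in G \ M whose indexing is a depth-first indexing on each tree
  (injective on each tree, and the descendants of every vertex v are exactly the vertices
  of its tree whose index lies in the interval starting at the index of v of length the
  number of descendants; in particular descendants get larger indices).\<close>
definition forest_in :: "'v set \<Rightarrow> 'v set set \<Rightarrow> 'v set set \<Rightarrow> 'v rforest \<Rightarrow> bool" where
  "forest_in V E M F \<longleftrightarrow>
     finite (fverts F) \<and> fverts F \<subseteq> V \<and>
     (\<forall>v\<in>fverts F. \<forall>p. fpar F v = Some p \<longrightarrow> p \<in> fverts F \<and> {v, p} \<in> E - M) \<and>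
     (\<forall>v\<in>fverts F. \<exists>r. anc F v r \<and> fpar F r = None) \<and>
     (\<forall>r\<in>froots F. inj_on (fdfs F) (tree_verts F r)) \<and>
     (\<forall>v\<in>fverts F. descendants F v =
        {w\<in>fverts F. same_tree F w v \<and> fdfs F v \<le> fdfs F w \<and>
                      fdfs F w < fdfs F v + card (descendants F v)})"

definition fle :: "'v rforest \<Rightarrow> 'v \<Rightarrow> 'v \<Rightarrow> bool" where
  "fle F u v \<longleftrightarrow> same_tree F u v \<and> fdfs F u \<ge> fdfs F v"

definition cascading_pair :: "'v rforest \<Rightarrow> 'v \<Rightarrow> 'v rforest \<Rightarrow> 'v \<Rightarrow> bool" where
  "cascading_pair F1 r1 F2 r2 \<longleftrightarrow>
     tree_verts F1 r1 \<inter> tree_verts F2 r2 = {} \<or>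
     (r2 \<in> fleaves F1 \<inter> tree_verts F1 r1 \<and> card (tree_verts F1 r1 \<inter> tree_verts F2 r2) = 1)"

definition cascading_seq :: "'v rforest list \<Rightarrow> bool" where
  "cascading_seq Fs \<longleftrightarrow>
     (\<forall>i<length Fs. \<forall>j<length Fs. i + 2 \<le> j \<longrightarrow> fverts (Fs ! i) \<inter> fverts (Fs ! j) = {}) \<and>
     (\<forall>i. Suc i < length Fs \<longrightarrow>
        (\<forall>r1\<in>froots (Fs ! i). \<forall>r2\<in>froots (Fs ! Suc i). cascading_pair (Fs ! i) r1 (Fs ! Suc i) r2))"

definition seq_verts :: "'v rforest list \<Rightarrow> 'v set" where
  "seq_verts Fs = (\<Union>F\<in>set Fs. fverts F)"

definition seq_internal :: "'v rforest list \<Rightarrow> 'v set" where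
  "seq_internal Fs = (\<Union>F\<in>set Fs. fverts F - froots F - fleaves F)"

definition seq_le :: "'v rforest list \<Rightarrow> 'v \<Rightarrow> 'v \<Rightarrow> bool" where
  "seq_le Fs = (\<lambda>x y. \<exists>F\<in>set Fs. fle F x y)\<^sup>+\<^sup>+"

definition seq_less :: "'v rforest list \<Rightarrow> 'v \<Rightarrow> 'v \<Rightarrow> bool" where
  "seq_less Fs x y \<longleftrightarrow> seq_le Fs x y \<and> x \<noteq> y"

text \<open>Edges of the x--y path in the tree of F containing x and y: the edge from w to its
  parent lies on the path iff exactly one of x, y is a descendant of w.\<close>
definition tree_path_edges :: "'v rforest \<Rightarrow> 'v \<Rightarrow> 'v \<Rightarrow> 'v set set" where
  "tree_path_edges F x y =
     {{w, p} |w p. w \<in> fverts F \<and> fpar F w = Some p \<and> (anc F x w \<noteq> anc F y w)}"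

definition seq_path_exists :: "'v rforest list \<Rightarrow> 'v \<Rightarrow> 'v \<Rightarrow> bool" where
  "seq_path_exists Fs x y \<longleftrightarrow> (\<exists>F\<in>set Fs. same_tree F x y)"

definition seq_path_edges :: "'v rforest list \<Rightarrow> 'v \<Rightarrow> 'v \<Rightarrow> 'v set set" where
  "seq_path_edges Fs x y = (\<Union>F\<in>{F\<in>set Fs. same_tree F x y}. tree_path_edges F x y)"

definition seq_path_internal :: "'v rforest list \<Rightarrow> 'v \<Rightarrow> 'v \<Rightarrow> 'v set" where
  "seq_path_internal Fs x y = \<Union> (seq_path_edges Fs x y) - {x, y}"

definition Pj :: "'v set set \<Rightarrow> ('v set \<Rightarrow> nat) \<Rightarrow> ('v \<times> 'v) set \<Rightarrow> nat \<Rightarrow> ('v \<times> 'v) set" where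
  "Pj M col P j = {(u, v)\<in>P. mcl M col u = j \<and> mcl M col v = j}"

definition Dj :: "'v set set \<Rightarrow> ('v set \<Rightarrow> nat) \<Rightarrow> ('v \<times> 'v) set \<Rightarrow> nat \<Rightarrow> ('v \<times> 'v) set" where
  "Dj M col P j = {(u, v)\<in>Pj M col P j. {u, v} \<in> M}"

definition Uj :: "'v set set \<Rightarrow> ('v set \<Rightarrow> nat) \<Rightarrow> ('v \<times> 'v) set \<Rightarrow> nat \<Rightarrow> 'v set" where
  "Uj M col P j = fst ` Pj M col P j"

definition Vj :: "'v set set \<Rightarrow> ('v set \<Rightarrow> nat) \<Rightarrow> ('v \<times> 'v) set \<Rightarrow> nat \<Rightarrow> 'v set" where
  "Vj M col P j = snd ` Pj M col P j"

definition Sj :: "'v set set \<Rightarrow> ('v set \<Rightarrow> nat) \<Rightarrow> ('v \<times> 'v) set \<Rightarrow> nat \<Rightarrow> 'v set" where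
  "Sj M col P j = Uj M col P j \<union> Vj M col P j"

definition rp :: "'v set set \<Rightarrow> 'v set \<Rightarrow> int" where
  "rp M S = int (card {e\<in>M. e \<inter> S \<noteq> {}}) - 1"

definition high :: "'v set set \<Rightarrow> ('v set \<Rightarrow> nat) \<Rightarrow> ('v \<times> 'v) set \<Rightarrow> nat \<Rightarrow> bool" where
  "high M col P j \<longleftrightarrow> j \<in> matching_colours M col \<and>
     real_of_int (rp M (Sj M col P j)) \<ge>
       (real (card (Pj M col P j)) - real (card (Dj M col P j))) / 2"

definition low :: "'v set set \<Rightarrow> ('v set \<Rightarrow> nat) \<Rightarrow> ('v \<times> 'v) set \<Rightarrow> nat \<Rightarrow> bool" where
  "low M col P j \<longleftrightarrow> j \<in> matching_colours M col \<and> \<not> high M col P j"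

definition good_forest_seq ::
  "'v set \<Rightarrow> 'v set set \<Rightarrow> 'v set set \<Rightarrow> ('v set \<Rightarrow> nat) \<Rightarrow> 'v rforest list \<Rightarrow> bool" where
  "good_forest_seq V E M col Fs \<longleftrightarrow>
     (\<forall>F\<in>set Fs. forest_in V E M F) \<and> cascading_seq Fs \<and>
     int (sum_list (map (\<lambda>F. card (fleaves F)) Fs)) = excess V E M col \<and>
     (\<forall>i\<in>nonmatching_colours E M col. seq_internal Fs \<inter> colour_verts E col i = {}) \<and>
     (\<forall>F\<in>set Fs. \<forall>u\<in>froots F \<union> fleaves F. \<forall>e\<in>fedges F. u \<in> e \<longrightarrow> col e = mcl M col u)"

definition good_pairs ::
  "'v set \<Rightarrow> 'v set set \<Rightarrow> 'v set set \<Rightarrow> ('v set \<Rightarrow> nat) \<Rightarrow> 'v rforest list \<Rightarrow> ('v \<times> 'v) set \<Rightarrow> bool" where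
  "good_pairs V E M col Fs P \<longleftrightarrow>
     finite P \<and> int (card P) = excess V E M col \<and>
     (\<forall>(u, v)\<in>P. u \<in> seq_verts Fs \<and> v \<in> seq_verts Fs) \<and>
     inj_on fst P \<and>
     (\<forall>(u, v)\<in>P. seq_less Fs u v \<and> seq_path_exists Fs u v) \<and>
     (\<forall>(u, v)\<in>P. mcl M col u = mcl M col v) \<and>
     (\<forall>(u, v)\<in>P. \<forall>e\<in>seq_path_edges Fs u v. col e = mcl M col u) \<and>
     (\<forall>(u, v)\<in>P. \<forall>z\<in>seq_path_internal Fs u v. mcl M col z \<noteq> mcl M col u) \<and>
     (\<forall>(u, v)\<in>P. \<forall>(u', v')\<in>P. (u, v) \<noteq> (u', v') \<and> {u, v} \<in> M \<and> {u', v'} \<in> M \<longrightarrow>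
        seq_path_internal Fs u v \<inter> seq_path_internal Fs u' v' = {})"

end

theory Submission
  imports Defs "HOL-Library.Product_Lexorder"
begin

lemma fi_sub: assumes "forest_in V E M F" shows "fverts F \<subseteq> V"
  using assms unfolding forest_in_def by (elim conjE) assumption

lemma fi_par: assumes "forest_in V E M F" "v \<in> fverts F" "fpar F v = Some p" shows "p \<in> fverts F"
proof -
  have "\<forall>v\<in>fverts F. \<forall>p. fpar F v = Some p \<longrightarrow> p \<in> fverts F \<and> {v, p} \<in> E - M"
    using assms(1) unfolding forest_in_def by (elim conjE) assumption
  then show ?thesis using assms(2,3) by blast
qed

lemma fi_root: assumes "forest_in V E M F" "v \<in> fverts F" shows "\<exists>r. anc F v r \<and> fpar F r = None"
proof -
  have "\<forall>v\<in>fverts F. \<exists>r. anc F v r \<and> fpar F r = None"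
    using assms(1) unfolding forest_in_def by (elim conjE) assumption
  then show ?thesis using assms(2) by blast
qed

lemma fi_inj: assumes "forest_in V E M F" "r \<in> froots F" shows "inj_on (fdfs F) (tree_verts F r)"
proof -
  have "\<forall>r\<in>froots F. inj_on (fdfs F) (tree_verts F r)"
    using assms(1) unfolding forest_in_def by (elim conjE) assumption
  then show ?thesis using assms(2) by blast
qed

lemma fi_desc: assumes "forest_in V E M F" "v \<in> fverts F" "w \<in> descendants F v"
  shows "fdfs F v \<le> fdfs F w"
proof -
  have "\<forall>v\<in>fverts F. descendants F v =
        {w\<in>fverts F. same_tree F w v \<and> fdfs F v \<le> fdfs F w \<and>
                      fdfs F w < fdfs F v + card (descendants F v)}"
    using assms(1) unfolding forest_in_def by (elim conjE) assumption
  then have "descendants F v =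
        {w\<in>fverts F. same_tree F w v \<and> fdfs F v \<le> fdfs F w \<and>
                      fdfs F w < fdfs F v + card (descendants F v)}" using assms(2) by (rule bspec)
  then show ?thesis using assms(3) by (metis (no_types, lifting) mem_Collect_eq)
qed

lemma cs_disj: assumes "cascading_seq Fs" "i < length Fs" "j < length Fs" "i + 2 \<le> j"
  shows "fverts (Fs ! i) \<inter> fverts (Fs ! j) = {}"
proof -
  have "\<forall>i<length Fs. \<forall>j<length Fs. i + 2 \<le> j \<longrightarrow> fverts (Fs ! i) \<inter> fverts (Fs ! j) = {}"
    using assms(1) unfolding cascading_seq_def by (elim conjE) assumption
  then show ?thesis using assms(2-4) by blast
qed

lemma cs_pair: assumes "cascading_seq Fs" "Suc i < length Fs" "r1 \<in> froots (Fs ! i)" "r2 \<in> froots (Fs ! Suc i)"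
  shows "cascading_pair (Fs ! i) r1 (Fs ! Suc i) r2"
proof -
  have "\<forall>i. Suc i < length Fs \<longrightarrow>
        (\<forall>r1\<in>froots (Fs ! i). \<forall>r2\<in>froots (Fs ! Suc i). cascading_pair (Fs ! i) r1 (Fs ! Suc i) r2)"
    using assms(1) unfolding cascading_seq_def by (elim conjE) assumption
  then show ?thesis using assms(2-4) by blast
qed

lemma anc_fverts:
  assumes fi: "forest_in V E M F" and st: "(fstep F)\<^sup>*\<^sup>* x w" and x: "x \<in> fverts F"
  shows "w \<in> fverts F"
  using st
proof (induction rule: rtranclp_induct)
  case base then show ?case using x .
next
  case (step y z)
  then show ?case using fi_par[OF fi] unfolding fstep_def by blast
qed

lemma anc_fv2: assumes fi: "forest_in V E M F" and a: "anc F x w" shows "w \<in> fverts F"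
proof -
  have "x \<in> fverts F" "(fstep F)\<^sup>*\<^sup>* x w" using a unfolding anc_def by auto
  then show ?thesis using anc_fverts[OF fi] by blast
qed

lemma anc_trans: "anc F x w \<Longrightarrow> anc F w r \<Longrightarrow> anc F x r"
  unfolding anc_def by auto

lemma same_tree_root:
  assumes fi: "forest_in V E M F" and st: "same_tree F x y"
  shows "\<exists>r. r \<in> froots F \<and> anc F x r \<and> anc F y r"
proof -
  obtain w where w: "anc F x w" "anc F y w" using st unfolding same_tree_def by blast
  have "w \<in> fverts F" using anc_fv2[OF fi w(1)] .
  then obtain r where r: "anc F w r" "fpar F r = None" using fi_root[OF fi] by blast
  have "r \<in> fverts F" using anc_fv2[OF fi r(1)] .
  moreover have "anc F x r" by (rule anc_trans[OF w(1) r(1)])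
  moreover have "anc F y r" by (rule anc_trans[OF w(2) r(1)])
  ultimately show ?thesis using r(2) unfolding froots_def by blast
qed

lemma root_of:
  assumes fi: "forest_in V E M F" and x: "x \<in> fverts F"
  shows "\<exists>r. r \<in> froots F \<and> anc F x r"
proof -
  obtain r where r: "anc F x r" "fpar F r = None" using fi_root[OF fi x] by blast
  have "r \<in> fverts F" using anc_fv2[OF fi r(1)] .
  then show ?thesis using r unfolding froots_def by blast
qed

lemma casc_root:
  assumes fis: "\<forall>F\<in>set Fs. forest_in V E M F" and cs: "cascading_seq Fs"
    and k: "Suc k < length Fs"
    and x1: "x \<in> fverts (Fs ! k)" and ar: "anc (Fs ! Suc k) x r" and r: "r \<in> froots (Fs ! Suc k)"
  shows "x = r"
proof -
  have fi1: "forest_in V E M (Fs ! k)" using fis k by simp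
  obtain r1 where r1: "r1 \<in> froots (Fs ! k)" "anc (Fs ! k) x r1" using root_of[OF fi1 x1] by blast
  have cp: "cascading_pair (Fs ! k) r1 (Fs ! Suc k) r" using cs_pair[OF cs k r1(1) r] .
  have xin: "x \<in> tree_verts (Fs ! k) r1 \<inter> tree_verts (Fs ! Suc k) r"
    using r1 ar x1 unfolding tree_verts_def anc_def by auto
  have rin: "r \<in> tree_verts (Fs ! Suc k) r" using r unfolding tree_verts_def anc_def froots_def by auto
  from cp xin have "r \<in> tree_verts (Fs ! k) r1" and c1: "card (tree_verts (Fs ! k) r1 \<inter> tree_verts (Fs ! Suc k) r) = 1"
    unfolding cascading_pair_def by auto
  with rin have rin2: "r \<in> tree_verts (Fs ! k) r1 \<inter> tree_verts (Fs ! Suc k) r" by blast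
  from c1 obtain a where a: "tree_verts (Fs ! k) r1 \<inter> tree_verts (Fs ! Suc k) r = {a}" using card_1_singletonE by blast
  have "x = a" using xin a by simp
  moreover have "r = a" using rin2 a by simp
  ultimately show ?thesis by simp
qed

definition mi :: "'v rforest list \<Rightarrow> 'v \<Rightarrow> nat" where
  "mi Fs x = (LEAST i. i < length Fs \<and> x \<in> fverts (Fs ! i))"

definition psi :: "'v rforest list \<Rightarrow> 'v \<Rightarrow> nat \<times> nat" where
  "psi Fs x = (mi Fs x, fdfs (Fs ! mi Fs x) x)"

lemma mi_props:
  assumes cs: "cascading_seq Fs" and k: "k < length Fs" and x: "x \<in> fverts (Fs ! k)"
  shows "mi Fs x \<le> k" "x \<in> fverts (Fs ! mi Fs x)" "k \<le> Suc (mi Fs x)"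
proof -
  have P: "k < length Fs \<and> x \<in> fverts (Fs ! k)" using k x by simp
  show "mi Fs x \<le> k" unfolding mi_def by (rule Least_le) (rule P)
  have L: "mi Fs x < length Fs \<and> x \<in> fverts (Fs ! mi Fs x)" unfolding mi_def by (rule LeastI) (rule P)
  then show "x \<in> fverts (Fs ! mi Fs x)" by simp
  show "k \<le> Suc (mi Fs x)"
  proof (rule ccontr)
    assume "\<not> k \<le> Suc (mi Fs x)"
    then have "mi Fs x + 2 \<le> k" by simp
    then have "fverts (Fs ! mi Fs x) \<inter> fverts (Fs ! k) = {}" using cs_disj[OF cs _ k] L by blast
    with L x show False by blast
  qed
qed

lemma key_step:
  assumes fis: "\<forall>F\<in>set Fs. forest_in V E M F" and cs: "cascading_seq Fs"
    and k: "k < length Fs" and fl: "fle (Fs ! k) x y" and ne: "x \<noteq> y"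
  shows "psi Fs y < psi Fs x"
proof -
  let ?F = "Fs ! k"
  have fi: "forest_in V E M ?F" using fis k by simp
  have st: "same_tree ?F x y" and dd: "fdfs ?F y \<le> fdfs ?F x" using fl unfolding fle_def by auto
  obtain r where r: "r \<in> froots ?F" "anc ?F x r" "anc ?F y r" using same_tree_root[OF fi st] by blast
  have xF: "x \<in> fverts ?F" and yF: "y \<in> fverts ?F" using st unfolding same_tree_def by auto
  have rF: "r \<in> fverts ?F" using r unfolding froots_def by auto
  have "y \<in> descendants ?F r" using r yF unfolding descendants_def by auto
  then have dr: "fdfs ?F r \<le> fdfs ?F y" using fi_desc[OF fi rF] by blast
  have inj: "inj_on (fdfs ?F) (tree_verts ?F r)" using fi_inj[OF fi r(1)] .
  have "x \<in> tree_verts ?F r" "y \<in> tree_verts ?F r" using r xF yF unfolding tree_verts_def by auto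
  then have "fdfs ?F x \<noteq> fdfs ?F y" using inj ne unfolding inj_on_def by blast
  with dd have lt: "fdfs ?F y < fdfs ?F x" by simp
  note mx = mi_props[OF cs k xF] and my = mi_props[OF cs k yF]
  show ?thesis
  proof (cases "mi Fs y = k")
    case False
    then obtain j where j: "k = Suc j" "mi Fs y = j" using my by (cases k) auto
    have yr: "y = r" using casc_root[OF fis cs _ _ _ r(1)[unfolded j]] j k my(2) r(3) by auto
    have "mi Fs x \<noteq> j"
    proof
      assume "mi Fs x = j"
      then have "x = r" using casc_root[OF fis cs _ _ _ r(1)[unfolded j]] j k mx(2) r(2) by auto
      with yr ne show False by simp
    qed
    then have "mi Fs x = k" using mx j by simp
    then show ?thesis using j unfolding psi_def by (simp add: less_prod_def)
  next
    case True
    show ?thesis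
    proof (cases "mi Fs x = k")
      case True
      then show ?thesis using \<open>mi Fs y = k\<close> lt unfolding psi_def by (simp add: less_prod_def)
    next
      case False
      then obtain j where j: "k = Suc j" "mi Fs x = j" using mx by (cases k) auto
      have "x = r" using casc_root[OF fis cs _ _ _ r(1)[unfolded j]] j k mx(2) r(2) by auto
      then show ?thesis using dr lt by simp
    qed
  qed
qed

lemma seq_le_psi:
  assumes fis: "\<forall>F\<in>set Fs. forest_in V E M F" and cs: "cascading_seq Fs"
    and sl: "seq_le Fs x y"
  shows "x = y \<or> psi Fs y < psi Fs x"
  using sl unfolding seq_le_def
proof (induction rule: tranclp_induct)
  case (base y)
  then obtain F where F: "F \<in> set Fs" "fle F x y" by blast
  then obtain k where "k < length Fs" "F = Fs ! k" by (metis in_set_conv_nth)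
  then show ?case using key_step[OF fis cs] F by blast
next
  case (step y z)
  then obtain F where F: "F \<in> set Fs" "fle F y z" by blast
  then obtain k where "k < length Fs" "F = Fs ! k" by (metis in_set_conv_nth)
  then have "y = z \<or> psi Fs z < psi Fs y" using key_step[OF fis cs] F by blast
  with step.IH show ?case by auto
qed

lemma seq_le_refl:
  assumes "x \<in> seq_verts Fs" shows "seq_le Fs x x"
proof -
  obtain F where "F \<in> set Fs" "x \<in> fverts F" using assms unfolding seq_verts_def by blast
  then have "fle F x x" unfolding fle_def same_tree_def anc_def by auto
  then show ?thesis unfolding seq_le_def using \<open>F \<in> set Fs\<close> by blast
qed

theorem lemma8:
  fixes V :: "'v set" and E M :: "'v set set" and col :: "'v set \<Rightarrow> nat"
    and Fs :: "'v rforest list" and P :: "('v \<times> 'v) set"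
  assumes "simple_graph V E"
    and "perfect_matching V E M"
    and "optimal_2_colouring V E col"
    and "good_forest_seq V E M col Fs"
    and "good_pairs V E M col Fs P"
  shows "\<forall>j\<in>matching_colours M col. Pj M col P j \<noteq> {} \<longrightarrow>
           card (Sj M col P j) \<ge> card (Pj M col P j) + 1 \<and>
           real_of_int (rp M (Sj M col P j)) \<ge> (real (card (Pj M col P j)) - 1) / 2 \<and>
           (Dj M col P j \<noteq> {} \<longrightarrow> high M col P j) \<and>
           (low M col P j \<longrightarrow>
              (\<forall>x\<in>Sj M col P j. \<forall>e\<in>M. x \<in> e \<longrightarrow> e \<subseteq> Sj M col P j) \<and>
              (\<exists>!vs. vs \<in> Sj M col P j \<and> (\<forall>x\<in>Sj M col P j. seq_le Fs x vs))) \<and>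
           (low M col P j \<longrightarrow> card (Sj M col P j) \<ge> 4)"
proof (intro ballI impI)
  fix j assume jm: "j \<in> matching_colours M col" and PJne: "Pj M col P j \<noteq> {}"
  define PJ where "PJ = Pj M col P j"
  define S where "S = Sj M col P j"
  define D where "D = Dj M col P j"
  define U where "U = Uj M col P j"
  have gf: "good_forest_seq V E M col Fs" and gp: "good_pairs V E M col Fs P" using assms by simp_all
  have fis: "\<forall>F\<in>set Fs. forest_in V E M F" and cs: "cascading_seq Fs"
    using gf unfolding good_forest_seq_def by blast+
  have finP: "finite P" and injP: "inj_on fst P"
    and inV: "\<forall>(u, v)\<in>P. u \<in> seq_verts Fs \<and> v \<in> seq_verts Fs"
    and lessP: "\<forall>(u, v)\<in>P. seq_less Fs u v"
    using gp unfolding good_pairs_def by blast+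
  have PJsub: "PJ \<subseteq> P" unfolding PJ_def Pj_def by auto
  have finPJ: "finite PJ" using PJsub finP finite_subset by blast
  have SU: "S = U \<union> snd ` PJ" unfolding S_def U_def Sj_def Uj_def Vj_def PJ_def by simp
  have UPJ: "U = fst ` PJ" unfolding U_def Uj_def PJ_def by simp
  have cardU: "card U = card PJ" unfolding UPJ using injP PJsub card_image inj_on_subset by blast
  have finS: "finite S" unfolding SU UPJ using finPJ by simp
  have Sseq: "S \<subseteq> seq_verts Fs" unfolding SU UPJ using inV PJsub by force
  have "\<And>F. F \<in> set Fs \<Longrightarrow> fverts F \<subseteq> V" using fis fi_sub by blast
  then have seqV: "seq_verts Fs \<subseteq> V" unfolding seq_verts_def by blast
  have SV: "S \<subseteq> V" using Sseq seqV by blast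
  have PJless: "\<And>u v. (u, v) \<in> PJ \<Longrightarrow> psi Fs v < psi Fs u \<and> seq_le Fs u v \<and> u \<noteq> v"
  proof -
    fix u v assume "(u, v) \<in> PJ"
    then have "seq_less Fs u v" using lessP PJsub by blast
    then show "psi Fs v < psi Fs u \<and> seq_le Fs u v \<and> u \<noteq> v"
      using seq_le_psi[OF fis cs] unfolding seq_less_def by blast
  qed
  have Sne: "S \<noteq> {}" using PJne unfolding SU PJ_def by auto
  have US: "U \<subseteq> S" unfolding SU by blast
  have a: "card PJ + 1 \<le> card S"
  proof (rule ccontr)
    assume "\<not> card PJ + 1 \<le> card S"
    then have "card S \<le> card U" using cardU by simp
    then have "card U = card S" using card_mono[OF finS US] by (rule le_antisym[rotated])
    then have UeqS: "U = S" by (rule card_subset_eq[OF finS US])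
    have "Min (psi Fs ` S) \<in> psi Fs ` S" using Min_in finS Sne by simp
    then obtain s where s: "s \<in> S" "psi Fs s = Min (psi Fs ` S)" by (metis imageE)
    then have "s \<in> U" using UeqS by simp
    then obtain v where v: "(s, v) \<in> PJ" unfolding UPJ by auto
    then have "v \<in> S" unfolding SU by force
    then have "psi Fs s \<le> psi Fs v" using s finS by (metis Min_le finite_imageI imageI)
    with PJless[OF v] show False using leD by blast
  qed
  define ME where "ME = {e\<in>M. e \<inter> S \<noteq> {}}"
  have sg: "simple_graph V E" and pm: "perfect_matching V E M" using assms by auto
  have finV: "finite V" using sg unfolding simple_graph_def by simp
  have MsubE: "M \<subseteq> E" using pm unfolding perfect_matching_def by (rule conjunct1)
  have pmv: "\<And>v. v \<in> V \<Longrightarrow> \<exists>e. e \<in> M \<and> v \<in> e"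
  proof -
    fix v assume "v \<in> V"
    then have "\<exists>!e. e \<in> M \<and> v \<in> e" using pm unfolding perfect_matching_def by blast
    then show "\<exists>e. e \<in> M \<and> v \<in> e" by (rule ex1_implies_ex)
  qed
  have ME2: "\<And>e. e \<in> ME \<Longrightarrow> card e = 2" using sg MsubE unfolding ME_def simple_graph_def by blast
  have "E \<subseteq> Pow V" using sg unfolding simple_graph_def by blast
  then have finE: "finite E" using finV finite_subset by blast
  have "ME \<subseteq> E" using MsubE unfolding ME_def by blast
  then have finME: "finite ME" using finE finite_subset by blast
  have "\<forall>e\<in>ME. finite e" using ME2 by (metis card.infinite zero_neq_numeral)
  then have finUME: "finite (\<Union>ME)" using finME by (intro finite_Union) auto
  have SUME: "S \<subseteq> \<Union>ME"
  proof
    fix x assume "x \<in> S"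
    then have "x \<in> V" using SV by blast
    then obtain e where "e \<in> M" "x \<in> e" using pmv by blast
    then show "x \<in> \<Union>ME" unfolding ME_def using \<open>x \<in> S\<close> by blast
  qed
  have "card (\<Union>ME) \<le> sum card ME" by (rule card_Union_le_sum_card)
  also have "\<dots> = 2 * card ME" using ME2 by simp
  finally have cUME: "card (\<Union>ME) \<le> 2 * card ME" .
  have cS: "card S \<le> 2 * card ME" using card_mono[OF finUME SUME] cUME by simp
  have rpS: "rp M S = int (card ME) - 1" unfolding rp_def ME_def by simp
  have b: "real_of_int (rp M S) \<ge> (real (card PJ) - 1) / 2"
    using a cS unfolding rpS by simp
  have "D \<subseteq> PJ" unfolding D_def Dj_def PJ_def by auto
  then have finD: "finite D" using finPJ finite_subset by blast
  have c: "D \<noteq> {} \<longrightarrow> high M col P j"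
  proof
    assume "D \<noteq> {}"
    then have "card D \<ge> 1" using finD by (simp add: Suc_leI card_gt_0_iff)
    then have "real (card D) \<ge> 1" by simp
    then have "(real (card PJ) - real (card D)) / 2 \<le> (real (card PJ) - 1) / 2" by (simp add: divide_right_mono)
    then have "real_of_int (rp M S) \<ge> (real (card PJ) - real (card D)) / 2" using b by linarith
    then show "high M col P j" using jm unfolding high_def S_def[symmetric] PJ_def[symmetric] D_def[symmetric]
      by simp
  qed
  have lowfacts: "card S = 2 * card ME \<and> card S = card PJ + 1 \<and> D = {}" if lw: "low M col P j"
  proof -
    have "\<not> real_of_int (rp M S) \<ge> (real (card PJ) - real (card D)) / 2"
      using lw jm unfolding low_def high_def S_def[symmetric] PJ_def[symmetric] D_def[symmetric] by simp
    then have "real (2 * card ME) < real (card PJ) - real (card D) + 2" unfolding rpS by simp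
    then have "2 * card ME + card D < card PJ + 2" by linarith
    with a cS have "card D = 0" "card S = 2 * card ME" "card S = card PJ + 1" by linarith+
    then show ?thesis using finD by simp
  qed
  have d1: "\<forall>x\<in>S. \<forall>e\<in>M. x \<in> e \<longrightarrow> e \<subseteq> S" if lw: "low M col P j"
  proof (intro ballI impI)
    fix x e assume "x \<in> S" "e \<in> M" "x \<in> e"
    then have eME: "e \<in> ME" unfolding ME_def by blast
    show "e \<subseteq> S"
    proof (rule ccontr)
      assume "\<not> e \<subseteq> S"
      then have "S \<subset> \<Union>ME" using SUME eME by blast
      then have "card S < card (\<Union>ME)" using finUME psubset_card_mono by blast
      with cUME lowfacts[OF lw] show False by simp
    qed
  qed
  have d2: "\<exists>!vs. vs \<in> S \<and> (\<forall>x\<in>S. seq_le Fs x vs)" if lw: "low M col P j"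
  proof -
    have "card (S - U) = card S - card U" by (rule card_Diff_subset[OF finite_subset[OF US finS] US])
    moreover have "card S = card PJ + 1" using lowfacts[OF lw] by (elim conjE)
    ultimately have "card (S - U) = 1" using cardU by simp
    then have "\<exists>vs. S - U = {vs}" by (metis card_1_singletonE)
    then obtain vs where vs: "S - U = {vs}" by (elim exE)
    define rk where "rk = (\<lambda>x. card {y\<in>S. psi Fs y < psi Fs x})"
    have alln: "\<forall>x\<in>S. rk x = n \<longrightarrow> seq_le Fs x vs" for n
    proof (rule less_induct[where P="\<lambda>n. \<forall>x\<in>S. rk x = n \<longrightarrow> seq_le Fs x vs"])
      fix n assume IH: "\<And>m. m < n \<Longrightarrow> \<forall>x\<in>S. rk x = m \<longrightarrow> seq_le Fs x vs"
      show "\<forall>x\<in>S. rk x = n \<longrightarrow> seq_le Fs x vs"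
      proof (intro ballI impI)
        fix x assume xS: "x \<in> S" and xn: "rk x = n"
        show "seq_le Fs x vs"
        proof (cases "x = vs")
          case True
          have "x \<in> seq_verts Fs" using Sseq xS by blast
          then have "seq_le Fs x x" by (rule seq_le_refl)
          then show ?thesis using True by simp
        next
          case False
          then have "x \<in> U" using vs xS by blast
          then obtain v where v: "(x, v) \<in> PJ" unfolding UPJ by force
          then have vS: "v \<in> S" unfolding SU by force
          have pl1: "psi Fs v < psi Fs x" using PJless[OF v] by (elim conjE)
          have pl2: "seq_le Fs x v" using PJless[OF v] by (elim conjE)
          let ?A = "{y\<in>S. psi Fs y < psi Fs v}"
          let ?B = "{y\<in>S. psi Fs y < psi Fs x}"
          have sub: "?A \<subseteq> ?B"
          proof
            fix y assume "y \<in> ?A"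
            then have "y \<in> S" "psi Fs y < psi Fs v" by simp_all
            then show "y \<in> ?B" using less_trans[OF _ pl1] by simp
          qed
          have "v \<notin> ?A" by simp
          moreover have "v \<in> ?B" using vS pl1 by simp
          ultimately have "?A \<subset> ?B" using sub by blast
          moreover have "finite ?B" using finS by simp
          ultimately have "card ?A < card ?B" by (simp add: psubset_card_mono)
          then have "rk v < n" using xn unfolding rk_def by simp
          then have "\<forall>x\<in>S. rk x = rk v \<longrightarrow> seq_le Fs x vs" by (rule IH)
          then have "seq_le Fs v vs" using vS by blast
          then show ?thesis using pl2 unfolding seq_le_def by (rule tranclp_trans[rotated])
        qed
      qed
    qed
    have all: "x \<in> S \<Longrightarrow> seq_le Fs x vs" for x using alln by blast
    have vsS: "vs \<in> S" using vs by blast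
    show ?thesis
    proof (rule ex1I[where a=vs])
      show "vs \<in> S \<and> (\<forall>x\<in>S. seq_le Fs x vs)" using vsS all by blast
    next
      fix w assume w: "w \<in> S \<and> (\<forall>x\<in>S. seq_le Fs x w)"
      then have "seq_le Fs vs w" "seq_le Fs w vs" using vsS all by auto
      then have "w = vs \<or> psi Fs w < psi Fs vs" "vs = w \<or> psi Fs vs < psi Fs w"
        using seq_le_psi[OF fis cs] by blast+
      then show "w = vs" using order_less_asym by blast
    qed
  qed
  have e: "card S \<ge> 4" if lw: "low M col P j"
  proof (rule ccontr)
    assume "\<not> card S \<ge> 4"
    moreover have "card PJ \<ge> 1" using PJne finPJ PJ_def by (simp add: Suc_leI card_gt_0_iff)
    then have "card S \<ge> 2" using lowfacts[OF lw] by simp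
    moreover have "even (card S)" using lowfacts[OF lw] by simp
    ultimately have cS2: "card S = 2" by presburger
    then have "card PJ = 1" using lowfacts[OF lw] by simp
    then obtain p where "PJ = {p}" by (rule card_1_singletonE)
    then obtain u v where uv: "PJ = {(u, v)}" by (cases p) auto
    then have Suv: "S = {u, v}" unfolding SU UPJ by (simp add: insert_commute)
    have "u \<noteq> v" using PJless uv by blast
    have "u \<in> V" using SV Suv by blast
    then obtain e where e: "e \<in> M" "u \<in> e" using pmv by blast
    then have "e \<subseteq> S" using d1[OF lw] Suv by blast
    moreover have "card e = 2" using ME2 e unfolding ME_def Suv by blast
    ultimately have "e = S" using cS2 card_subset_eq[OF finS] by simp
    then have "{u, v} \<in> M" using e Suv by simp
    then have "(u, v) \<in> D" unfolding D_def Dj_def using uv PJ_def by simp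
    then show False using lowfacts[OF lw] by simp
  qed
  show "card (Sj M col P j) \<ge> card (Pj M col P j) + 1 \<and>
           real_of_int (rp M (Sj M col P j)) \<ge> (real (card (Pj M col P j)) - 1) / 2 \<and>
           (Dj M col P j \<noteq> {} \<longrightarrow> high M col P j) \<and>
           (low M col P j \<longrightarrow>
              (\<forall>x\<in>Sj M col P j. \<forall>e\<in>M. x \<in> e \<longrightarrow> e \<subseteq> Sj M col P j) \<and>
              (\<exists>!vs. vs \<in> Sj M col P j \<and> (\<forall>x\<in>Sj M col P j. seq_le Fs x vs))) \<and>
           (low M col P j \<longrightarrow> card (Sj M col P j) \<ge> 4)"
    unfolding S_def[symmetric] PJ_def[symmetric] D_def[symmetric]
  proof (intro conjI impI)
    show "card PJ + 1 \<le> card S" by (rule a)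
    show "(real (card PJ) - 1) / 2 \<le> real_of_int (rp M S)" by (rule b)
    show "high M col P j" if "D \<noteq> {}" using c that by blast
    show "\<forall>x\<in>S. \<forall>e\<in>M. x \<in> e \<longrightarrow> e \<subseteq> S" if "low M col P j" by (rule d1[OF that])
    show "\<exists>!vs. vs \<in> S \<and> (\<forall>x\<in>S. seq_le Fs x vs)" if "low M col P j" by (rule d2[OF that])
    show "4 \<le> card S" if "low M col P j" by (rule e[OF that])
  qed
qed

end
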